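(* Let $P\in\Delta$ and $Q_P\in\Delta_P$. The following are equivalent: (1) $MI_{Q_P}(X:Y|Z)=\min_{Q\in\Delta_P}MI_Q(X:Y|Z)$; (2) $MI_{Q_P}(X:Z|Y)=\min_{Q\in\Delta_P}MI_Q(X:Z|Y)$; (3) $MI_{Q_P}(X:(Y,Z))=\min_{Q\in\Delta_P}MI_Q(X:(Y,Z))$; (4) $CoI_{Q_P}(X;Y;Z)=\max_{Q\in\Delta_P}CoI_Q(X;Y;Z)$; (5) $H_{Q_P}(X|Y,Z)=\max_{Q\in\Delta_P}H_Q(X|Y,Z)$. Moreover, $Q\mapsto MI_Q(X:Y|Z)$, $Q\mapsto MI_Q(X:Z|Y)$ and $Q\mapsto MI_Q(X:(Y,Z))$ are convex on $\Delta_P$, and $Q\mapsto CoI_Q(X;Y;Z)$ and $Q\mapsto H_Q(X|Y,Z)$ are concave on $\Delta_P$. Consequently, for fixed $P$, the set of all $Q_P\in\Delta_P$ satisfying these conditions is convex.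
   Context: $X,Y,Z$ are random variables with finite state spaces $\mathcal X,\mathcal Y,\mathcal Z$. $\Delta$ denotes the set of all probability distributions on $\mathcal X\times\mathcal Y\times\mathcal Z$; a subscript $Q$ on an information quantity means it is computed w.r.t. $Q\in\Delta$. For $P\in\Delta$, $\Delta_P=\{Q\in\Delta: Q(X=x,Y=y)=P(X=x,Y=y)\text{ and }Q(X=x,Z=z)=P(X=x,Z=z)\ \forall x,y,z\}$. Co-information: $CoI_Q(X;Y;Z)=MI_Q(X:Y)-MI_Q(X:Y|Z)$. *)

theory Defs
  imports "HOL-Analysis.Analysis"
begin

type_synonym ('x,'y,'z) dist3 = "real ^ ('x \<times> 'y \<times> 'z)"

definition Delta :: "('x::finite,'y::finite,'z::finite) dist3 set" where
  "Delta = {Q. (\<forall>w. 0 \<le> Q $ w) \<and> (\<Sum>w\<in>UNIV. Q $ w) = 1}"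

definition pXY :: "('x::finite,'y::finite,'z::finite) dist3 \<Rightarrow> 'x \<Rightarrow> 'y \<Rightarrow> real" where
  "pXY Q x y = (\<Sum>z\<in>UNIV. Q $ (x,y,z))"
definition pXZ :: "('x::finite,'y::finite,'z::finite) dist3 \<Rightarrow> 'x \<Rightarrow> 'z \<Rightarrow> real" where
  "pXZ Q x z = (\<Sum>y\<in>UNIV. Q $ (x,y,z))"
definition pYZ :: "('x::finite,'y::finite,'z::finite) dist3 \<Rightarrow> 'y \<Rightarrow> 'z \<Rightarrow> real" where
  "pYZ Q y z = (\<Sum>x\<in>UNIV. Q $ (x,y,z))"
definition pX :: "('x::finite,'y::finite,'z::finite) dist3 \<Rightarrow> 'x \<Rightarrow> real" where
  "pX Q x = (\<Sum>y\<in>UNIV. \<Sum>z\<in>UNIV. Q $ (x,y,z))"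
definition pY :: "('x::finite,'y::finite,'z::finite) dist3 \<Rightarrow> 'y \<Rightarrow> real" where
  "pY Q y = (\<Sum>x\<in>UNIV. \<Sum>z\<in>UNIV. Q $ (x,y,z))"
definition pZ :: "('x::finite,'y::finite,'z::finite) dist3 \<Rightarrow> 'z \<Rightarrow> real" where
  "pZ Q z = (\<Sum>x\<in>UNIV. \<Sum>y\<in>UNIV. Q $ (x,y,z))"

definition DeltaP :: "('x::finite,'y::finite,'z::finite) dist3 \<Rightarrow> ('x,'y,'z) dist3 set" where
  "DeltaP P = {Q \<in> Delta. (\<forall>x y. pXY Q x y = pXY P x y) \<and> (\<forall>x z. pXZ Q x z = pXZ P x z)}"

definition MI_XY_Z :: "('x::finite,'y::finite,'z::finite) dist3 \<Rightarrow> real" where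
  "MI_XY_Z Q = (\<Sum>(x,y,z)\<in>UNIV. if Q $ (x,y,z) = 0 then 0 else
      Q $ (x,y,z) * log 2 (Q $ (x,y,z) * pZ Q z / (pXZ Q x z * pYZ Q y z)))"

definition MI_XZ_Y :: "('x::finite,'y::finite,'z::finite) dist3 \<Rightarrow> real" where
  "MI_XZ_Y Q = (\<Sum>(x,y,z)\<in>UNIV. if Q $ (x,y,z) = 0 then 0 else
      Q $ (x,y,z) * log 2 (Q $ (x,y,z) * pY Q y / (pXY Q x y * pYZ Q y z)))"

definition MI_X_YZ :: "('x::finite,'y::finite,'z::finite) dist3 \<Rightarrow> real" where
  "MI_X_YZ Q = (\<Sum>(x,y,z)\<in>UNIV. if Q $ (x,y,z) = 0 then 0 else
      Q $ (x,y,z) * log 2 (Q $ (x,y,z) / (pX Q x * pYZ Q y z)))"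

definition MI_XY :: "('x::finite,'y::finite,'z::finite) dist3 \<Rightarrow> real" where
  "MI_XY Q = (\<Sum>(x,y)\<in>UNIV. if pXY Q x y = 0 then 0 else
      pXY Q x y * log 2 (pXY Q x y / (pX Q x * pY Q y)))"

definition CoI :: "('x::finite,'y::finite,'z::finite) dist3 \<Rightarrow> real" where
  "CoI Q = MI_XY Q - MI_XY_Z Q"

definition H_X_YZ :: "('x::finite,'y::finite,'z::finite) dist3 \<Rightarrow> real" where
  "H_X_YZ Q = - (\<Sum>(x,y,z)\<in>UNIV. if Q $ (x,y,z) = 0 then 0 else
      Q $ (x,y,z) * log 2 (Q $ (x,y,z) / pYZ Q y z))"

end

theory Submission imports Defs begin

definition gl :: "real \<Rightarrow> real \<Rightarrow> real" where
  "gl a b = (if a = 0 then 0 else a * ln (a / b))"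

lemma logsum_aux:
  fixes a b A B :: real
  assumes "0 \<le> a" "a > 0 \<Longrightarrow> b > 0" "0 \<le> b" "A > 0" "B > 0"
  shows "a * ln (A / B) - gl a b \<le> b * A / B - a"
proof (cases "a = 0")
  case True then show ?thesis using assms by (simp add: gl_def)
next
  case False
  hence a: "a > 0" using assms by auto
  hence b: "b > 0" using assms by auto
  have "ln (A / B) - ln (a / b) = ln ((A * b) / (B * a))"
    using a b assms by (simp add: ln_div ln_mult)
  also have "\<dots> \<le> (A * b) / (B * a) - 1" using a b assms by (intro ln_le_minus_one) simp
  finally have "a * (ln (A / B) - ln (a / b)) \<le> a * ((A * b) / (B * a) - 1)"
    using a by (intro mult_left_mono) auto
  thus ?thesis using a False by (simp add: gl_def algebra_simps)
qed

lemma logsum2: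
  fixes a1 a2 b1 b2 :: real
  assumes "0 \<le> a1" "0 \<le> a2" "a1 > 0 \<Longrightarrow> b1 > 0" "a2 > 0 \<Longrightarrow> b2 > 0" "0 \<le> b1" "0 \<le> b2"
  shows "gl (a1 + a2) (b1 + b2) \<le> gl a1 b1 + gl a2 b2"
proof (cases "a1 + a2 = 0")
  case True
  hence "a1 = 0" "a2 = 0" using assms by auto
  thus ?thesis by (simp add: gl_def)
next
  case False
  hence A: "a1 + a2 > 0" using assms by auto
  have B: "b1 + b2 > 0" using A assms by (cases "a1 > 0") auto
  have 1: "a1 * ln ((a1+a2) / (b1+b2)) - gl a1 b1 \<le> b1 * (a1+a2) / (b1+b2) - a1"
    using assms A B by (intro logsum_aux) auto
  have 2: "a2 * ln ((a1+a2) / (b1+b2)) - gl a2 b2 \<le> b2 * (a1+a2) / (b1+b2) - a2"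
    using assms A B by (intro logsum_aux) auto
  have 3: "b1 * (a1+a2) / (b1+b2) + b2 * (a1+a2) / (b1+b2) = a1 + a2"
  proof -
    have "b1 * (a1+a2) / (b1+b2) + b2 * (a1+a2) / (b1+b2) = (b1+b2) * (a1+a2) / (b1+b2)"
      by (simp add: add_divide_distrib distrib_right)
    also have "\<dots> = a1 + a2" using B by simp
    finally show ?thesis .
  qed
  have "gl (a1 + a2) (b1 + b2) = a1 * ln ((a1+a2) / (b1+b2)) + a2 * ln ((a1+a2) / (b1+b2))"
    using False by (simp add: gl_def algebra_simps)
  thus ?thesis using 1 2 3 by linarith
qed

lemma gl_hom: "0 \<le> t \<Longrightarrow> gl (t * a) (t * b) = t * gl a b"
  by (cases "t = 0") (auto simp: gl_def)

lemma gl_convex: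
  fixes a1 a2 b1 b2 u v :: real
  assumes "0 \<le> a1" "0 \<le> a2" "a1 > 0 \<Longrightarrow> b1 > 0" "a2 > 0 \<Longrightarrow> b2 > 0" "0 \<le> b1" "0 \<le> b2"
    "0 \<le> u" "0 \<le> v"
  shows "gl (u * a1 + v * a2) (u * b1 + v * b2) \<le> u * gl a1 b1 + v * gl a2 b2"
proof -
  have "gl (u * a1 + v * a2) (u * b1 + v * b2) \<le> gl (u * a1) (u * b1) + gl (v * a2) (v * b2)"
    using assms by (intro logsum2) (auto simp: zero_less_mult_iff)
  thus ?thesis using assms by (simp add: gl_hom)
qed

lemma sum3: "(\<Sum>(x,y,z)\<in>UNIV. f x y z) = (\<Sum>x\<in>UNIV. \<Sum>y\<in>UNIV. \<Sum>z\<in>UNIV. f x y z)"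
  by (simp add: UNIV_Times_UNIV[symmetric] sum.cartesian_product del: UNIV_Times_UNIV)

lemma H_gl: "H_X_YZ Q = - ((\<Sum>(x,y,z)\<in>UNIV. gl (Q $ (x,y,z)) (pYZ Q y z)) / ln 2)"
  unfolding H_X_YZ_def sum3 sum_divide_distrib by (intro arg_cong[where f=uminus] sum.cong refl) (simp add: gl_def log_def)

lemma Delta_nonneg: "Q \<in> Delta \<Longrightarrow> 0 \<le> Q $ w" by (cases w) (auto simp: Delta_def)

lemma pYZ_ge: "Q \<in> Delta \<Longrightarrow> Q $ (x,y,z) \<le> pYZ Q y z"
  unfolding pYZ_def by (rule member_le_sum[where f="\<lambda>x. Q $ (x,y,z)"]) (auto simp: Delta_def)
lemma pXZ_ge: "Q \<in> Delta \<Longrightarrow> Q $ (x,y,z) \<le> pXZ Q x z"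
  unfolding pXZ_def by (rule member_le_sum[where f="\<lambda>y. Q $ (x,y,z)"]) (auto simp: Delta_def)
lemma pXY_ge: "Q \<in> Delta \<Longrightarrow> Q $ (x,y,z) \<le> pXY Q x y"
  unfolding pXY_def by (rule member_le_sum[where f="\<lambda>z. Q $ (x,y,z)"]) (auto simp: Delta_def)
lemma pX_ge: "Q \<in> Delta \<Longrightarrow> Q $ (x,y,z) \<le> pX Q x"
proof -
  assume Q: "Q \<in> Delta"
  have "Q $ (x,y,z) \<le> pXY Q x y" using pXY_ge[OF Q] .
  also have "\<dots> \<le> pX Q x" unfolding pX_def pXY_def[symmetric]
    by (rule member_le_sum) (auto simp: pXY_def Q Delta_nonneg sum_nonneg)
  finally show ?thesis .
qed
lemma pY_ge: "Q \<in> Delta \<Longrightarrow> Q $ (x,y,z) \<le> pY Q y"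
proof -
  assume Q: "Q \<in> Delta"
  have "Q $ (x,y,z) \<le> pXY Q x y" using pXY_ge[OF Q] .
  also have "\<dots> \<le> pY Q y" unfolding pY_def pXY_def[symmetric]
    by (rule member_le_sum) (auto simp: pXY_def Q Delta_nonneg sum_nonneg)
  finally show ?thesis .
qed
lemma pZ_ge: "Q \<in> Delta \<Longrightarrow> Q $ (x,y,z) \<le> pZ Q z"
proof -
  assume Q: "Q \<in> Delta"
  have "Q $ (x,y,z) \<le> pXZ Q x z" using pXZ_ge[OF Q] .
  also have "\<dots> \<le> pZ Q z" unfolding pZ_def pXZ_def[symmetric]
    by (rule member_le_sum) (auto simp: pXZ_def Q Delta_nonneg sum_nonneg)
  finally show ?thesis .
qed

lemma pZ_eq: "pZ Q z = (\<Sum>x\<in>UNIV. pXZ Q x z)"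
  unfolding pZ_def pXZ_def by simp
lemma pX_eq: "pX Q x = (\<Sum>y\<in>UNIV. pXY Q x y)"
  unfolding pX_def pXY_def by simp
lemma pY_eq: "pY Q y = (\<Sum>x\<in>UNIV. pXY Q x y)"
  unfolding pY_def pXY_def by simp


lemma sw23: "(\<Sum>x\<in>A. \<Sum>y\<in>B. \<Sum>z\<in>C. f x y z) = (\<Sum>x\<in>A. \<Sum>z\<in>C. \<Sum>y\<in>B. f x y z)"
  by (rule sum.cong[OF refl]) (rule sum.swap)

lemma L_z: "(\<Sum>(x,y,z)\<in>UNIV. Q $ (x,y,z) * g z) = (\<Sum>z\<in>UNIV. pZ Q z * g z)"
  unfolding sum3 pZ_def sum_distrib_right
  by (rule trans[OF sw23 sum.swap])
lemma L_y: "(\<Sum>(x,y,z)\<in>UNIV. Q $ (x,y,z) * g y) = (\<Sum>y\<in>UNIV. pY Q y * g y)"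
  unfolding sum3 pY_def sum_distrib_right
  by (rule sum.swap)
lemma L_x: "(\<Sum>(x,y,z)\<in>UNIV. Q $ (x,y,z) * g x) = (\<Sum>x\<in>UNIV. pX Q x * g x)"
  unfolding sum3 pX_def sum_distrib_right by (rule refl)
lemma L_xz: "(\<Sum>(x,y,z)\<in>UNIV. Q $ (x,y,z) * g x z) = (\<Sum>x\<in>UNIV. \<Sum>z\<in>UNIV. pXZ Q x z * g x z)"
  unfolding sum3 pXZ_def sum_distrib_right
  by (rule sw23)
lemma L_xy: "(\<Sum>(x,y,z)\<in>UNIV. Q $ (x,y,z) * g x y) = (\<Sum>x\<in>UNIV. \<Sum>y\<in>UNIV. pXY Q x y * g x y)"
  unfolding sum3 pXY_def sum_distrib_right by (rule refl)


lemma pos_of: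
  assumes "Q \<in> Delta" "Q $ (x,y,z) \<noteq> 0"
  shows "Q $ (x,y,z) > 0" "pXY Q x y > 0" "pXZ Q x z > 0" "pYZ Q y z > 0" "pX Q x > 0" "pY Q y > 0" "pZ Q z > 0"
proof -
  have q: "Q $ (x,y,z) > 0" using Delta_nonneg[OF assms(1), of "(x,y,z)"] assms(2) by linarith
  show "Q $ (x,y,z) > 0" by (rule q)
  show "pXY Q x y > 0" using q pXY_ge[OF assms(1)] by (rule less_le_trans)
  show "pXZ Q x z > 0" using q pXZ_ge[OF assms(1)] by (rule less_le_trans)
  show "pYZ Q y z > 0" using q pYZ_ge[OF assms(1)] by (rule less_le_trans)
  show "pX Q x > 0" using q pX_ge[OF assms(1)] by (rule less_le_trans)
  show "pY Q y > 0" using q pY_ge[OF assms(1)] by (rule less_le_trans)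
  show "pZ Q z > 0" using q pZ_ge[OF assms(1)] by (rule less_le_trans)
qed

lemma pt1:
  assumes "Q \<in> Delta"
  shows "(if Q $ (x,y,z) = 0 then 0 else Q $ (x,y,z) * log 2 (Q $ (x,y,z) * pZ Q z / (pXZ Q x z * pYZ Q y z)))
    = (if Q $ (x,y,z) = 0 then 0 else Q $ (x,y,z) * log 2 (Q $ (x,y,z) / pYZ Q y z))
      + Q $ (x,y,z) * log 2 (pZ Q z) - Q $ (x,y,z) * log 2 (pXZ Q x z)"
proof (cases "Q $ (x,y,z) = 0")
  case False
  note p = pos_of[OF assms False]
  show ?thesis using p False by (simp add: log_mult_pos log_divide_pos algebra_simps)
qed simp

lemma pt2:
  assumes "Q \<in> Delta"
  shows "(if Q $ (x,y,z) = 0 then 0 else Q $ (x,y,z) * log 2 (Q $ (x,y,z) * pY Q y / (pXY Q x y * pYZ Q y z)))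
    = (if Q $ (x,y,z) = 0 then 0 else Q $ (x,y,z) * log 2 (Q $ (x,y,z) / pYZ Q y z))
      + Q $ (x,y,z) * log 2 (pY Q y) - Q $ (x,y,z) * log 2 (pXY Q x y)"
proof (cases "Q $ (x,y,z) = 0")
  case False
  note p = pos_of[OF assms False]
  show ?thesis using p False by (simp add: log_mult_pos log_divide_pos algebra_simps)
qed simp

lemma pt3:
  assumes "Q \<in> Delta"
  shows "(if Q $ (x,y,z) = 0 then 0 else Q $ (x,y,z) * log 2 (Q $ (x,y,z) / (pX Q x * pYZ Q y z)))
    = (if Q $ (x,y,z) = 0 then 0 else Q $ (x,y,z) * log 2 (Q $ (x,y,z) / pYZ Q y z))
      - Q $ (x,y,z) * log 2 (pX Q x)"
proof (cases "Q $ (x,y,z) = 0")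
  case False
  note p = pos_of[OF assms False]
  show ?thesis using p False by (simp add: log_mult_pos log_divide_pos algebra_simps)
qed simp

lemma dec1:
  assumes "Q \<in> Delta"
  shows "MI_XY_Z Q = - H_X_YZ Q + (\<Sum>(x,y,z)\<in>UNIV. Q $ (x,y,z) * log 2 (pZ Q z))
           - (\<Sum>(x,y,z)\<in>UNIV. Q $ (x,y,z) * log 2 (pXZ Q x z))"
proof -
  have "MI_XY_Z Q = (\<Sum>x\<in>UNIV. \<Sum>y\<in>UNIV. \<Sum>z\<in>UNIV.
     (if Q $ (x,y,z) = 0 then 0 else Q $ (x,y,z) * log 2 (Q $ (x,y,z) / pYZ Q y z))
      + Q $ (x,y,z) * log 2 (pZ Q z) - Q $ (x,y,z) * log 2 (pXZ Q x z))"
    unfolding MI_XY_Z_def sum3 by (intro sum.cong refl) (rule pt1[OF assms])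
  thus ?thesis unfolding H_X_YZ_def sum3 by (simp add: sum.distrib sum_subtractf)
qed

lemma dec2:
  assumes "Q \<in> Delta"
  shows "MI_XZ_Y Q = - H_X_YZ Q + (\<Sum>(x,y,z)\<in>UNIV. Q $ (x,y,z) * log 2 (pY Q y))
           - (\<Sum>(x,y,z)\<in>UNIV. Q $ (x,y,z) * log 2 (pXY Q x y))"
proof -
  have "MI_XZ_Y Q = (\<Sum>x\<in>UNIV. \<Sum>y\<in>UNIV. \<Sum>z\<in>UNIV.
     (if Q $ (x,y,z) = 0 then 0 else Q $ (x,y,z) * log 2 (Q $ (x,y,z) / pYZ Q y z))
      + Q $ (x,y,z) * log 2 (pY Q y) - Q $ (x,y,z) * log 2 (pXY Q x y))"
    unfolding MI_XZ_Y_def sum3 by (intro sum.cong refl) (rule pt2[OF assms])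
  thus ?thesis unfolding H_X_YZ_def sum3 by (simp add: sum.distrib sum_subtractf)
qed

lemma dec3:
  assumes "Q \<in> Delta"
  shows "MI_X_YZ Q = - H_X_YZ Q - (\<Sum>(x,y,z)\<in>UNIV. Q $ (x,y,z) * log 2 (pX Q x))"
proof -
  have "MI_X_YZ Q = (\<Sum>x\<in>UNIV. \<Sum>y\<in>UNIV. \<Sum>z\<in>UNIV.
     (if Q $ (x,y,z) = 0 then 0 else Q $ (x,y,z) * log 2 (Q $ (x,y,z) / pYZ Q y z))
      - Q $ (x,y,z) * log 2 (pX Q x))"
    unfolding MI_X_YZ_def sum3 by (intro sum.cong refl) (rule pt3[OF assms])
  thus ?thesis unfolding H_X_YZ_def sum3 by (simp add: sum.distrib sum_subtractf)
qed

lemma DP_marg: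
  assumes "Q \<in> DeltaP P"
  shows "Q \<in> Delta" "pXY Q = pXY P" "pXZ Q = pXZ P" "pZ Q = pZ P" "pX Q = pX P" "pY Q = pY P"
proof -
  show "Q \<in> Delta" using assms by (simp add: DeltaP_def)
  show a: "pXY Q = pXY P" using assms by (auto simp: DeltaP_def fun_eq_iff)
  show b: "pXZ Q = pXZ P" using assms by (auto simp: DeltaP_def fun_eq_iff)
  show "pZ Q = pZ P" by (simp add: fun_eq_iff pZ_eq b)
  show "pX Q = pX P" by (simp add: fun_eq_iff pX_eq a)
  show "pY Q = pY P" by (simp add: fun_eq_iff pY_eq a)
qed

definition "c1 P = (\<Sum>z\<in>UNIV. pZ P z * log 2 (pZ P z)) - (\<Sum>x\<in>UNIV. \<Sum>z\<in>UNIV. pXZ P x z * log 2 (pXZ P x z))"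
definition "c2 P = (\<Sum>y\<in>UNIV. pY P y * log 2 (pY P y)) - (\<Sum>x\<in>UNIV. \<Sum>y\<in>UNIV. pXY P x y * log 2 (pXY P x y))"
definition "c3 P = - (\<Sum>x\<in>UNIV. pX P x * log 2 (pX P x))"

lemma MI1: assumes "Q \<in> DeltaP P" shows "MI_XY_Z Q = - H_X_YZ Q + c1 P"
proof -
  note m = DP_marg[OF assms]
  have "MI_XY_Z Q = - H_X_YZ Q + (\<Sum>z\<in>UNIV. pZ Q z * log 2 (pZ Q z)) - (\<Sum>x\<in>UNIV. \<Sum>z\<in>UNIV. pXZ Q x z * log 2 (pXZ Q x z))"
    using dec1[OF m(1)] L_z[of Q "\<lambda>z. log 2 (pZ Q z)"] L_xz[of Q "\<lambda>x z. log 2 (pXZ Q x z)"] by simp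
  thus ?thesis by (simp add: c1_def m)
qed

lemma MI2: assumes "Q \<in> DeltaP P" shows "MI_XZ_Y Q = - H_X_YZ Q + c2 P"
proof -
  note m = DP_marg[OF assms]
  have "MI_XZ_Y Q = - H_X_YZ Q + (\<Sum>y\<in>UNIV. pY Q y * log 2 (pY Q y)) - (\<Sum>x\<in>UNIV. \<Sum>y\<in>UNIV. pXY Q x y * log 2 (pXY Q x y))"
    using dec2[OF m(1)] L_y[of Q "\<lambda>y. log 2 (pY Q y)"] L_xy[of Q "\<lambda>x y. log 2 (pXY Q x y)"] by simp
  thus ?thesis by (simp add: c2_def m)
qed

lemma MI3: assumes "Q \<in> DeltaP P" shows "MI_X_YZ Q = - H_X_YZ Q + c3 P"
proof -
  note m = DP_marg[OF assms]
  have "MI_X_YZ Q = - H_X_YZ Q - (\<Sum>x\<in>UNIV. pX Q x * log 2 (pX Q x))"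
    using dec3[OF m(1)] L_x[of Q "\<lambda>x. log 2 (pX Q x)"] by simp
  thus ?thesis by (simp add: c3_def m)
qed

lemma CoI1: assumes "Q \<in> DeltaP P" shows "CoI Q = H_X_YZ Q + (MI_XY P - c1 P)"
proof -
  note m = DP_marg[OF assms]
  have "MI_XY Q = MI_XY P" unfolding MI_XY_def m(2) m(5) m(6) by (rule refl)
  thus ?thesis using MI1[OF assms] by (simp add: CoI_def)
qed


lemma pYZ_lin: "pYZ (u *\<^sub>R A + v *\<^sub>R B) y z = u * pYZ A y z + v * pYZ B y z"
  by (simp add: pYZ_def sum.distrib sum_distrib_left)
lemma pXY_lin: "pXY (u *\<^sub>R A + v *\<^sub>R B) x y = u * pXY A x y + v * pXY B x y"
  by (simp add: pXY_def sum.distrib sum_distrib_left)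
lemma pXZ_lin: "pXZ (u *\<^sub>R A + v *\<^sub>R B) x z = u * pXZ A x z + v * pXZ B x z"
  by (simp add: pXZ_def sum.distrib sum_distrib_left)

lemma convex_DP: "convex (DeltaP P)"
  unfolding convex_def
proof (intro ballI allI impI)
  fix A B and u v :: real
  assume A: "A \<in> DeltaP P" and B: "B \<in> DeltaP P" and uv: "0 \<le> u" "0 \<le> v" "u + v = 1"
  have AD: "A \<in> Delta" and BD: "B \<in> Delta" using A B by (auto simp: DeltaP_def)
  have nn: "\<forall>w. 0 \<le> (u *\<^sub>R A + v *\<^sub>R B) $ w"
    using AD BD uv by (auto simp: Delta_nonneg)
  have "(\<Sum>w\<in>UNIV. (u *\<^sub>R A + v *\<^sub>R B) $ w) = u * (\<Sum>w\<in>UNIV. A $ w) + v * (\<Sum>w\<in>UNIV. B $ w)"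
    by (simp add: sum.distrib sum_distrib_left)
  also have "\<dots> = 1" using AD BD uv by (simp add: Delta_def)
  finally have "u *\<^sub>R A + v *\<^sub>R B \<in> Delta" using nn by (simp add: Delta_def)
  thus "u *\<^sub>R A + v *\<^sub>R B \<in> DeltaP P"
    using A B uv unfolding DeltaP_def
    by (simp add: pXY_lin pXZ_lin) (metis distrib_right mult_1)
qed

lemma negH_convex: "convex_on (DeltaP P) (\<lambda>Q. - H_X_YZ Q)"
  unfolding convex_on_def
proof (intro conjI convex_DP ballI allI impI)
  fix A B and u v :: real
  assume A: "A \<in> DeltaP P" and B: "B \<in> DeltaP P" and uv: "0 \<le> u" "0 \<le> v" "u + v = 1"
  have AD: "A \<in> Delta" and BD: "B \<in> Delta" using A B by (auto simp: DeltaP_def)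
  define S where "S Q = (\<Sum>x\<in>UNIV. \<Sum>y\<in>UNIV. \<Sum>z\<in>UNIV. gl (Q $ (x,y,z)) (pYZ Q y z))" for Q :: "('a,'b,'c) dist3"
  have HS: "- H_X_YZ Q = S Q / ln 2" for Q unfolding H_gl S_def sum3 by simp
  have "S (u *\<^sub>R A + v *\<^sub>R B) \<le> (\<Sum>x\<in>UNIV. \<Sum>y\<in>UNIV. \<Sum>z\<in>UNIV.
          u * gl (A $ (x,y,z)) (pYZ A y z) + v * gl (B $ (x,y,z)) (pYZ B y z))"
    unfolding S_def pYZ_lin
  proof (intro sum_mono)
    fix x y z
    show "gl ((u *\<^sub>R A + v *\<^sub>R B) $ (x, y, z)) (u * pYZ A y z + v * pYZ B y z)
         \<le> u * gl (A $ (x, y, z)) (pYZ A y z) + v * gl (B $ (x, y, z)) (pYZ B y z)"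
      using pos_of(1,4)[OF AD, of x y z] pos_of(1,4)[OF BD, of x y z]
        Delta_nonneg[OF AD, of "(x,y,z)"] Delta_nonneg[OF BD, of "(x,y,z)"]
        pYZ_ge[OF AD, of x y z] pYZ_ge[OF BD, of x y z] uv
      by (simp, intro gl_convex) auto
  qed
  also have "\<dots> = u * S A + v * S B"
    unfolding S_def by (simp add: sum.distrib sum_distrib_left)
  finally have "S (u *\<^sub>R A + v *\<^sub>R B) / ln 2 \<le> (u * S A + v * S B) / ln 2"
    by (intro divide_right_mono) auto
  thus "- H_X_YZ (u *\<^sub>R A + v *\<^sub>R B) \<le> u * - H_X_YZ A + v * - H_X_YZ B"
    unfolding HS by (simp add: add_divide_distrib)
qed

lemma convex_shift:
  assumes "convex_on S g" "\<And>x. x \<in> S \<Longrightarrow> f x = g x + c"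
  shows "convex_on S f"
  unfolding convex_on_def
proof (intro conjI ballI allI impI)
  show "convex S" using assms(1) by (rule convex_on_imp_convex)
  fix x y and u v :: real
  assume xy: "x \<in> S" "y \<in> S" and uv: "0 \<le> u" "0 \<le> v" "u + v = 1"
  have m: "u *\<^sub>R x + v *\<^sub>R y \<in> S" using convex_on_imp_convex[OF assms(1)] xy uv
    by (simp add: convex_def)
  have "g (u *\<^sub>R x + v *\<^sub>R y) \<le> u * g x + v * g y"
    using assms(1) xy uv by (simp add: convex_on_def)
  moreover have "c = u * c + v * c" using uv by (metis distrib_right mult_1)
  ultimately show "f (u *\<^sub>R x + v *\<^sub>R y) \<le> u * f x + v * f y"
    using assms(2)[OF m] assms(2)[OF xy(1)] assms(2)[OF xy(2)] by (simp add: algebra_simps)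
qed

lemma convex_argmin:
  assumes "convex_on S f"
  shows "convex {x \<in> S. \<forall>y\<in>S. f x \<le> f y}"
  unfolding convex_def
proof (intro ballI allI impI)
  fix a b and u v :: real
  assume a: "a \<in> {x \<in> S. \<forall>y\<in>S. f x \<le> f y}" and b: "b \<in> {x \<in> S. \<forall>y\<in>S. f x \<le> f y}"
    and uv: "0 \<le> u" "0 \<le> v" "u + v = 1"
  have m: "u *\<^sub>R a + v *\<^sub>R b \<in> S" using convex_on_imp_convex[OF assms] a b uv
    by (simp add: convex_def)
  have "\<forall>y\<in>S. f (u *\<^sub>R a + v *\<^sub>R b) \<le> f y"
  proof
    fix y assume y: "y \<in> S"
    have "f (u *\<^sub>R a + v *\<^sub>R b) \<le> u * f a + v * f b"
      using assms a b uv by (simp add: convex_on_def)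
    also have "\<dots> \<le> u * f y + v * f y"
      using a b y uv by (intro add_mono mult_left_mono) auto
    also have "\<dots> = f y" using uv by (metis distrib_right mult_1)
    finally show "f (u *\<^sub>R a + v *\<^sub>R b) \<le> f y" .
  qed
  thus "u *\<^sub>R a + v *\<^sub>R b \<in> {x \<in> S. \<forall>y\<in>S. f x \<le> f y}" using m by simp
qed

theorem mainTheorem2:
  fixes P QP :: "('x::finite,'y::finite,'z::finite) dist3"
  assumes "P \<in> Delta" and "QP \<in> DeltaP P"
  shows "((\<forall>Q\<in>DeltaP P. MI_XY_Z QP \<le> MI_XY_Z Q) \<longleftrightarrow> (\<forall>Q\<in>DeltaP P. MI_XZ_Y QP \<le> MI_XZ_Y Q))
       \<and> ((\<forall>Q\<in>DeltaP P. MI_XZ_Y QP \<le> MI_XZ_Y Q) \<longleftrightarrow> (\<forall>Q\<in>DeltaP P. MI_X_YZ QP \<le> MI_X_YZ Q))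
       \<and> ((\<forall>Q\<in>DeltaP P. MI_X_YZ QP \<le> MI_X_YZ Q) \<longleftrightarrow> (\<forall>Q\<in>DeltaP P. CoI Q \<le> CoI QP))
       \<and> ((\<forall>Q\<in>DeltaP P. CoI Q \<le> CoI QP) \<longleftrightarrow> (\<forall>Q\<in>DeltaP P. H_X_YZ Q \<le> H_X_YZ QP))
       \<and> convex_on (DeltaP P) MI_XY_Z
       \<and> convex_on (DeltaP P) MI_XZ_Y
       \<and> convex_on (DeltaP P) MI_X_YZ
       \<and> concave_on (DeltaP P) CoI
       \<and> concave_on (DeltaP P) H_X_YZ
       \<and> convex {Q \<in> DeltaP P. \<forall>Q'\<in>DeltaP P. MI_XY_Z Q \<le> MI_XY_Z Q'}"
proof -
  let ?D = "DeltaP P"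
  let ?A = "\<forall>Q\<in>?D. H_X_YZ Q \<le> H_X_YZ QP"
  note qp = assms(2)
  have e1: "(\<forall>Q\<in>?D. MI_XY_Z QP \<le> MI_XY_Z Q) \<longleftrightarrow> ?A"
  proof -
    have "\<forall>Q\<in>?D. (MI_XY_Z QP \<le> MI_XY_Z Q \<longleftrightarrow> H_X_YZ Q \<le> H_X_YZ QP)"
      using MI1[OF qp] MI1[where P=P] by simp
    thus ?thesis by blast
  qed
  have e2: "(\<forall>Q\<in>?D. MI_XZ_Y QP \<le> MI_XZ_Y Q) \<longleftrightarrow> ?A"
  proof -
    have "\<forall>Q\<in>?D. (MI_XZ_Y QP \<le> MI_XZ_Y Q \<longleftrightarrow> H_X_YZ Q \<le> H_X_YZ QP)"
      using MI2[OF qp] MI2[where P=P] by simp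
    thus ?thesis by blast
  qed
  have e3: "(\<forall>Q\<in>?D. MI_X_YZ QP \<le> MI_X_YZ Q) \<longleftrightarrow> ?A"
  proof -
    have "\<forall>Q\<in>?D. (MI_X_YZ QP \<le> MI_X_YZ Q \<longleftrightarrow> H_X_YZ Q \<le> H_X_YZ QP)"
      using MI3[OF qp] MI3[where P=P] by simp
    thus ?thesis by blast
  qed
  have e4: "(\<forall>Q\<in>?D. CoI Q \<le> CoI QP) \<longleftrightarrow> ?A"
  proof -
    have "\<forall>Q\<in>?D. (CoI Q \<le> CoI QP \<longleftrightarrow> H_X_YZ Q \<le> H_X_YZ QP)"
      using CoI1[OF qp] CoI1[where P=P] by simp
    thus ?thesis by blast
  qed
  have cv1: "convex_on ?D MI_XY_Z"
    by (rule convex_shift[OF negH_convex]) (rule MI1)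
  have cv2: "convex_on ?D MI_XZ_Y"
    by (rule convex_shift[OF negH_convex]) (rule MI2)
  have cv3: "convex_on ?D MI_X_YZ"
    by (rule convex_shift[OF negH_convex]) (rule MI3)
  have cc1: "concave_on ?D CoI"
    unfolding concave_on_def
    by (rule convex_shift[OF negH_convex, where c = "- (MI_XY P - c1 P)"]) (simp add: CoI1)
  have cc2: "concave_on ?D H_X_YZ"
    unfolding concave_on_def by (rule negH_convex)
  show ?thesis using e1 e2 e3 e4 cv1 cv2 cv3 cc1 cc2 convex_argmin[OF cv1] by blast
qed

end
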